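(* Let $w\in S_\infty$ with $\operatorname{len} w=m$. Then (i) $\varphi(\delta_w)\in\operatorname{span}\{\delta_u : u\in L_m(BC*S_\infty)\}$; and (ii) for each $y\in L_m(S_\infty)$ we have $\langle \varphi(\delta_y),\delta_w'\rangle\neq 0$ if and only if $y=w$.
   Context: $BC$ is the bicyclic monoid $\langle p,q : pq=e\rangle$ with involution $p^*=q$. $S_\infty$ is the free monoid on $\{t_n,t_n^*: n\in\mathbb{N}\}$ with involution $t_n\mapsto t_n^*$. $BC*S_\infty$ is the free product of monoids, with the involution $(s_1t_1\cdots s_nt_n)^*=t_n^*s_n^*\cdots t_1^*s_1^*$; $S_\infty$ is regarded as a submonoid of it. For a monoid $S$ with involution, $\mathbb{C}S$ is the semigroup algebra with basis $\{\delta_s:s\in S\}$, $\delta_s\delta_t=\delta_{st}$, $\delta_s^*=\delta_{s^*}$; for $s\in S$, $\delta_s'$ is the linear functional on $\mathbb{C}S$ with $\langle\delta_t,\delta_s'\rangle=1$ if $t=s$ and $0$ otherwise. Length: every $u\in BC*S_\infty\setminus\{e\}$ has a unique expression $u=w_1\cdots w_n$ with $n\in\mathbb{N}$, $w_i\in (BC\setminus\{e\})\cup\{t_j,t_j^*: j\in\mathbb{N}\}$, and $w_{i+1}\in\{t_j,t_j^*:j\in\mathbb{N}\}$ whenever $w_i\in BC\setminus\{e\}$; set $\operatorname{len}u=n$ and $\operatorname{len}e=0$. For $m\in\mathbb{N}_0$, $L_m(BC*S_\infty)=\{u\in BC*S_\infty:\operatorname{len}u\le m\}$ and $L_m(S_\infty)=\{u\in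 S_\infty:\operatorname{len}u\le m\}$. Fix a C*-norm $\|\cdot\|$ on $\mathbb{C}(BC*S_\infty)$ (i.e. a norm whose completion is a C*-algebra containing $\mathbb{C}(BC*S_\infty)$ as a $*$-subalgebra). Let $\gamma_n=(n\|\delta_{t_n}\|)^{-1}$ and $a_n=\delta_p+\gamma_n\delta_{t_n}$ for $n\in\mathbb{N}$, and let $\varphi:\mathbb{C}S_\infty\to\mathbb{C}(BC*S_\infty)$ be the unique unital $*$-homomorphism with $\varphi(\delta_{t_n})=a_n$ for all $n\in\mathbb{N}$. *)

theory Defs
  imports Complex_Main
begin

text \<open>B a b stands for the non-identity element
 q^a p^b of the bicyclic monoid (every element of BC has the unique normal
 form q^a p^b, and p = B 0 1, q = B 1 0).  T n False stands for t_n and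
 T n True for t_n^*.  The natural numbers indexing generators start at 1.\<close>

datatype lt = B nat nat | T nat bool

fun isB :: "lt \<Rightarrow> bool" where
  "isB (B a b) = True"
| "isB (T n s) = False"

fun reduced :: "lt list \<Rightarrow> bool" where
  "reduced [] = True"
| "reduced [x] = (x \<noteq> B 0 0)"
| "reduced (x # y # r) = (x \<noteq> B 0 0 \<and> \<not> (isB x \<and> isB y) \<and> reduced (y # r))"

definition bcs_word :: "lt list \<Rightarrow> bool" where
  "bcs_word u \<longleftrightarrow> reduced u \<and> (\<forall>n s. T n s \<in> set u \<longrightarrow> n \<ge> 1)"

definition sinf_word :: "lt list \<Rightarrow> bool" where
  "sinf_word u \<longleftrightarrow> (\<forall>x \<in> set u. \<exists>n s. n \<ge> 1 \<and> x = T n s)"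

text \<open>Multiplication in BC: (q^a p^b)(q^c p^d) = q^(a+(c-b)) p^(d+(b-c)).\<close>
fun junction :: "lt \<Rightarrow> lt \<Rightarrow> lt list" where
  "junction (B a b) (B c d) =
     (let a' = a + (c - b); d' = d + (b - c) in
      if a' = 0 \<and> d' = 0 then [] else [B a' d'])"
| "junction x y = [x, y]"

definition wmul :: "lt list \<Rightarrow> lt list \<Rightarrow> lt list" where
  "wmul u v = (if u = [] then v else if v = [] then u
               else butlast u @ junction (last u) (hd v) @ tl v)"

fun lstar :: "lt \<Rightarrow> lt" where
  "lstar (B a b) = B b a"
| "lstar (T n s) = T n (\<not> s)"

definition wstar :: "lt list \<Rightarrow> lt list" where
  "wstar u = rev (map lstar u)"

definition len :: "lt list \<Rightarrow> nat" where
  "len u = length u"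

definition Lm_bcs :: "nat \<Rightarrow> lt list set" where
  "Lm_bcs m = {u. bcs_word u \<and> len u \<le> m}"

definition Lm_sinf :: "nat \<Rightarrow> lt list set" where
  "Lm_sinf m = {u. sinf_word u \<and> len u \<le> m}"

definition supp :: "('w \<Rightarrow> complex) \<Rightarrow> 'w set" where
  "supp f = {u. f u \<noteq> 0}"

text \<open>Elements of the semigroup algebra CS, S given by a carrier predicate W.\<close>
definition in_alg :: "('w \<Rightarrow> bool) \<Rightarrow> ('w \<Rightarrow> complex) \<Rightarrow> bool" where
  "in_alg W f \<longleftrightarrow> finite (supp f) \<and> (\<forall>u \<in> supp f. W u)"

definition dlt :: "'w \<Rightarrow> 'w \<Rightarrow> complex" where
  "dlt s = (\<lambda>u. if u = s then 1 else 0)"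

definition azero :: "'w \<Rightarrow> complex" where
  "azero = (\<lambda>u. 0)"

definition aadd :: "('w \<Rightarrow> complex) \<Rightarrow> ('w \<Rightarrow> complex) \<Rightarrow> 'w \<Rightarrow> complex" where
  "aadd f g = (\<lambda>u. f u + g u)"

definition asmul :: "complex \<Rightarrow> ('w \<Rightarrow> complex) \<Rightarrow> 'w \<Rightarrow> complex" where
  "asmul c f = (\<lambda>u. c * f u)"

definition conv :: "('w \<Rightarrow> 'w \<Rightarrow> 'w) \<Rightarrow> ('w \<Rightarrow> complex) \<Rightarrow> ('w \<Rightarrow> complex) \<Rightarrow> 'w \<Rightarrow> complex" where
  "conv mul f g = (\<lambda>u. \<Sum>(x, y) \<in> {(x, y). f x \<noteq> 0 \<and> g y \<noteq> 0 \<and> mul x y = u}. f x * g y)"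

definition astar :: "('w \<Rightarrow> 'w) \<Rightarrow> ('w \<Rightarrow> complex) \<Rightarrow> 'w \<Rightarrow> complex" where
  "astar iv f = (\<lambda>u. cnj (f (iv u)))"

definition lin_span :: "'w set \<Rightarrow> ('w \<Rightarrow> complex) \<Rightarrow> bool" where
  "lin_span S f \<longleftrightarrow> (\<exists>F c. finite F \<and> F \<subseteq> S \<and> f = (\<lambda>x. \<Sum>u\<in>F. c u * dlt u x))"

text \<open>The pairing with delta_s' : the coefficient of delta_s.\<close>
definition dual_pair :: "('w \<Rightarrow> complex) \<Rightarrow> 'w \<Rightarrow> complex" where
  "dual_pair f s = f s"

text \<open>A C*-norm on C(BC * S_infinity): a norm which is submultiplicative and
 satisfies the C*-identity; equivalently its completion is a C*-algebra containing
 C(BC * S_infinity) as a *-subalgebra.\<close>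
definition cstar_norm :: "((lt list \<Rightarrow> complex) \<Rightarrow> real) \<Rightarrow> bool" where
  "cstar_norm N \<longleftrightarrow>
     (\<forall>f. in_alg bcs_word f \<longrightarrow> N f \<ge> 0 \<and> (N f = 0 \<longleftrightarrow> f = azero)) \<and>
     (\<forall>f g. in_alg bcs_word f \<longrightarrow> in_alg bcs_word g \<longrightarrow> N (aadd f g) \<le> N f + N g) \<and>
     (\<forall>c f. in_alg bcs_word f \<longrightarrow> N (asmul c f) = cmod c * N f) \<and>
     (\<forall>f g. in_alg bcs_word f \<longrightarrow> in_alg bcs_word g \<longrightarrow> N (conv wmul f g) \<le> N f * N g) \<and>
     (\<forall>f. in_alg bcs_word f \<longrightarrow> N (conv wmul (astar wstar f) f) = (N f)\<^sup>2)"

text \<open>Unital *-homomorphisms C S_infinity \<rightarrow> C(BC * S_infinity);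
 multiplication in S_infinity is concatenation, involution wstar.\<close>
definition unital_star_hom :: "((lt list \<Rightarrow> complex) \<Rightarrow> (lt list \<Rightarrow> complex)) \<Rightarrow> bool" where
  "unital_star_hom \<phi> \<longleftrightarrow>
     (\<forall>f. in_alg sinf_word f \<longrightarrow> in_alg bcs_word (\<phi> f)) \<and>
     (\<forall>f g. in_alg sinf_word f \<longrightarrow> in_alg sinf_word g \<longrightarrow> \<phi> (aadd f g) = aadd (\<phi> f) (\<phi> g)) \<and>
     (\<forall>c f. in_alg sinf_word f \<longrightarrow> \<phi> (asmul c f) = asmul c (\<phi> f)) \<and>
     (\<forall>f g. in_alg sinf_word f \<longrightarrow> in_alg sinf_word g \<longrightarrow>
        \<phi> (conv (@) f g) = conv wmul (\<phi> f) (\<phi> g)) \<and>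
     (\<forall>f. in_alg sinf_word f \<longrightarrow> \<phi> (astar wstar f) = astar wstar (\<phi> f)) \<and>
     \<phi> (dlt []) = dlt []"

definition gamma :: "((lt list \<Rightarrow> complex) \<Rightarrow> real) \<Rightarrow> nat \<Rightarrow> real" where
  "gamma N n = inverse (real n * N (dlt [T n False]))"

definition a_elt :: "((lt list \<Rightarrow> complex) \<Rightarrow> real) \<Rightarrow> nat \<Rightarrow> lt list \<Rightarrow> complex" where
  "a_elt N n = aadd (dlt [B 0 1]) (asmul (complex_of_real (gamma N n)) (dlt [T n False]))"

end

theory Submission
  imports Defs
begin

definition tcount :: "lt list \<Rightarrow> nat" where
  "tcount u = length (filter (\<lambda>x. \<not> isB x) u)"

lemma wstar_wstar: "wstar (wstar u) = u"
proof -
  have "lstar (lstar x) = x" for x by (cases x) auto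
  then show ?thesis unfolding wstar_def by (simp add: rev_map comp_def)
qed

lemma wstar_eq: "wstar a = s \<Longrightarrow> a = wstar s"
  using wstar_wstar by metis

lemma wmul_single:
  "tcount (wmul [x] v) = tcount [x] + tcount v \<and> length (wmul [x] v) \<le> 1 + length v"
proof (cases v)
  case Nil then show ?thesis by (simp add: wmul_def tcount_def)
next
  case (Cons h t)
  show ?thesis
  proof (cases x)
    case (B a b) note xb = this
    show ?thesis
    proof (cases h)
      case (B c d) then show ?thesis using Cons xb
        by (auto simp: wmul_def tcount_def Let_def)
    next
      case (T n s) then show ?thesis using Cons xb
        by (auto simp: wmul_def tcount_def)
    qed
  next
    case (T n s) then show ?thesis using Cons
      by (cases h) (auto simp: wmul_def tcount_def)
  qed
qed

lemma wmul_T: "wmul [T n s] r = T n s # r"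
  by (cases r; cases "hd r") (auto simp: wmul_def)

lemma conv_nz:
  "conv mul f g u \<noteq> 0 \<Longrightarrow> \<exists>a v. f a \<noteq> 0 \<and> g v \<noteq> 0 \<and> mul a v = u"
  unfolding conv_def by (cases "{(x, y). f x \<noteq> 0 \<and> g y \<noteq> 0 \<and> mul x y = u} = {}") auto

lemma conv_single:
  assumes "{(x, y). f x \<noteq> 0 \<and> g y \<noteq> 0 \<and> mul x y = u} = {(a,v)}"
  shows "conv mul f g u = f a * g v"
  unfolding conv_def using assms by simp

lemma dlt_cons: "dlt (x # r) = conv (@) (dlt [x]) (dlt r)"
proof
  fix u
  show "dlt (x # r) u = conv (@) (dlt [x]) (dlt r) u"
  proof (cases "u = x # r")
    case True
    have "{(a, v). dlt [x] a \<noteq> 0 \<and> dlt r v \<noteq> 0 \<and> a @ v = u} = {([x], r)}"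
      using True by (auto simp: dlt_def)
    then show ?thesis using True by (simp add: conv_single dlt_def)
  next
    case False
    have "{(a, v). dlt [x] a \<noteq> 0 \<and> dlt r v \<noteq> 0 \<and> a @ v = u} = {}"
      using False by (auto simp: dlt_def)
    then show ?thesis using False by (simp add: conv_def dlt_def)
  qed
qed

lemma in_alg_dlt: "W s \<Longrightarrow> in_alg W (dlt s)"
proof -
  assume "W s"
  have "supp (dlt s) = {s}" by (auto simp: supp_def dlt_def)
  then show ?thesis using \<open>W s\<close> by (simp add: in_alg_def)
qed

lemma star_dlt: "astar wstar (dlt s) = dlt (wstar s)"
  unfolding astar_def dlt_def using wstar_wstar by (auto intro!: ext)

lemma gamma_pos:
  assumes "cstar_norm N" "n \<ge> 1"
  shows "gamma N n > 0"
proof -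
  have ia: "in_alg bcs_word (dlt [T n False])"
    by (rule in_alg_dlt) (use assms(2) in \<open>auto simp: bcs_word_def\<close>)
  have nz: "dlt [T n False] \<noteq> azero"
  proof
    assume "dlt [T n False] = azero"
    then have "dlt [T n False] [T n False] = azero [T n False]" by simp
    then show False by (simp add: dlt_def azero_def)
  qed
  have "N (dlt [T n False]) \<ge> 0" "N (dlt [T n False]) \<noteq> 0"
    using assms(1) ia nz unfolding cstar_norm_def by blast+
  then have "N (dlt [T n False]) > 0" by simp
  then show ?thesis using assms(2) by (simp add: gamma_def)
qed

lemma letter:
  assumes "cstar_norm N" and hom: "unital_star_hom \<phi>"
    and gen: "\<forall>n \<ge> 1. \<phi> (dlt [T n False]) = a_elt N n"
    and n: "n \<ge> 1"
  shows "(\<forall>a. \<phi> (dlt [T n s]) a \<noteq> 0 \<longrightarrow> a = [T n s] \<or> (\<exists>b c. a = [B b c]))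
       \<and> \<phi> (dlt [T n s]) [T n s] = complex_of_real (gamma N n)"
proof (cases s)
  case False
  then show ?thesis using gen n
    by (auto simp: a_elt_def aadd_def asmul_def dlt_def)
next
  case True
  have ia: "in_alg sinf_word (dlt [T n False])"
    by (rule in_alg_dlt) (use n in \<open>auto simp: sinf_word_def\<close>)
  have ws: "wstar [T n False] = [T n True]" by (simp add: wstar_def)
  have "\<phi> (dlt [T n True]) = astar wstar (a_elt N n)"
    using hom ia gen n star_dlt[of "[T n False]"] ws unfolding unital_star_hom_def by metis
  moreover have "a_elt N n (wstar a) \<noteq> 0 \<Longrightarrow> a = [T n True] \<or> (\<exists>b c. a = [B b c])" for a
  proof -
    assume "a_elt N n (wstar a) \<noteq> 0"
    then have "wstar a = [B 0 1] \<or> wstar a = [T n False]"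
      by (auto simp: a_elt_def aadd_def asmul_def dlt_def split: if_splits)
    then have "a = wstar [B 0 1] \<or> a = wstar [T n False]" using wstar_eq by blast
    then show ?thesis by (auto simp: wstar_def)
  qed
  moreover have "a_elt N n (wstar [T n True]) = complex_of_real (gamma N n)"
    by (simp add: wstar_def a_elt_def aadd_def asmul_def dlt_def)
  ultimately show ?thesis using True by (auto simp: astar_def)
qed

lemma main:
  assumes cs: "cstar_norm N" and hom: "unital_star_hom \<phi>"
    and gen: "\<forall>n \<ge> 1. \<phi> (dlt [T n False]) = a_elt N n"
  shows "sinf_word y \<Longrightarrow>
    (\<forall>u. \<phi> (dlt y) u \<noteq> 0 \<longrightarrow> length u \<le> length y \<and> tcount u \<le> length y
          \<and> (tcount u = length y \<longrightarrow> u = y)) \<and> \<phi> (dlt y) y \<noteq> 0"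
proof (induction y)
  case Nil
  have "\<phi> (dlt []) = dlt []" using hom unfolding unital_star_hom_def by blast
  then show ?case by (auto simp: dlt_def tcount_def)
next
  case (Cons x r)
  from Cons.prems obtain n s where n: "n \<ge> 1" and x: "x = T n s"
    unfolding sinf_word_def by auto
  have sr: "sinf_word r" using Cons.prems unfolding sinf_word_def by auto
  note IH = Cons.IH[OF sr]
  have ix: "in_alg sinf_word (dlt [x])"
    by (rule in_alg_dlt) (use n x in \<open>auto simp: sinf_word_def\<close>)
  have ir: "in_alg sinf_word (dlt r)" by (rule in_alg_dlt) (rule sr)
  define A where "A = \<phi> (dlt [x])"
  define R where "R = \<phi> (dlt r)"
  have eq: "\<phi> (dlt (x # r)) = conv wmul A R"
    using hom ix ir dlt_cons[of x r] unfolding unital_star_hom_def A_def R_def by metis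
  have L: "(\<forall>a. A a \<noteq> 0 \<longrightarrow> a = [x] \<or> (\<exists>b c. a = [B b c])) \<and> A [x] = complex_of_real (gamma N n)"
    using letter[OF cs hom gen n, of s] x A_def by simp
  have key: "length u \<le> length (x#r) \<and> tcount u \<le> length (x#r)
          \<and> (tcount u = length (x#r) \<longrightarrow> a = [x] \<and> v = r \<and> u = x # r)"
    if "A a \<noteq> 0" "R v \<noteq> 0" "wmul a v = u" for a v u
  proof -
    have Rv: "length v \<le> length r \<and> tcount v \<le> length r \<and> (tcount v = length r \<longrightarrow> v = r)"
      using IH that(2) R_def by blast
    from L that(1) have "a = [x] \<or> (\<exists>b c. a = [B b c])" by blast
    then obtain l where al: "a = [l]" by blast
    have tl: "tcount [l] \<le> 1" by (simp add: tcount_def)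
    have w: "tcount u = tcount [l] + tcount v \<and> length u \<le> 1 + length v"
      using wmul_single[of l v] that(3) al by simp
    show ?thesis
    proof (intro conjI impI)
      show "length u \<le> length (x#r)" using w Rv by simp
      show "tcount u \<le> length (x#r)" using w Rv tl by simp
      assume h: "tcount u = length (x#r)"
      then have "tcount [l] = 1" "tcount v = length r" using w Rv tl by auto
      then have "a = [x]" using \<open>a = [x] \<or> (\<exists>b c. a = [B b c])\<close> al by (auto simp: tcount_def)
      moreover show "v = r" using Rv \<open>tcount v = length r\<close> by simp
      ultimately show "a = [x]" "u = x # r" using that(3) x wmul_T by auto
    qed
  qed
  have tc: "tcount (x # r) = length (x # r)"
  proof -
    have "filter (\<lambda>x. \<not> isB x) (x#r) = x#r"
      using Cons.prems unfolding sinf_word_def by (force simp: filter_id_conv)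
    then show ?thesis by (simp add: tcount_def)
  qed
  have S: "{(a, v). A a \<noteq> 0 \<and> R v \<noteq> 0 \<and> wmul a v = x # r} = {([x], r)}"
  proof
    show "{(a, v). A a \<noteq> 0 \<and> R v \<noteq> 0 \<and> wmul a v = x # r} \<subseteq> {([x], r)}"
      using key tc by auto
    have g: "gamma N n > 0" using gamma_pos[OF cs n] .
    have "A [x] \<noteq> 0" using L g by simp
    moreover have "R r \<noteq> 0" using IH R_def by blast
    ultimately show "{([x], r)} \<subseteq> {(a, v). A a \<noteq> 0 \<and> R v \<noteq> 0 \<and> wmul a v = x # r}"
      using x wmul_T by auto
  qed
  have val: "\<phi> (dlt (x # r)) (x # r) = A [x] * R r"
    using eq conv_single[OF S] by simp
  have "A [x] \<noteq> 0" using L gamma_pos[OF cs n] by simp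
  moreover have "R r \<noteq> 0" using IH R_def by blast
  ultimately have "\<phi> (dlt (x # r)) (x # r) \<noteq> 0" using val by simp
  moreover have "\<forall>u. \<phi> (dlt (x # r)) u \<noteq> 0 \<longrightarrow> length u \<le> length (x#r) \<and> tcount u \<le> length (x#r)
          \<and> (tcount u = length (x#r) \<longrightarrow> u = x # r)"
  proof (intro allI impI)
    fix u assume "\<phi> (dlt (x # r)) u \<noteq> 0"
    then obtain a v where "A a \<noteq> 0" "R v \<noteq> 0" "wmul a v = u"
      using conv_nz eq by metis
    then show "length u \<le> length (x#r) \<and> tcount u \<le> length (x#r)
          \<and> (tcount u = length (x#r) \<longrightarrow> u = x # r)" using key by blast
  qed
  ultimately show ?case by blast
qed

theorem lemma3p2:
  fixes N :: "(lt list \<Rightarrow> complex) \<Rightarrow> real"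
    and \<phi> :: "(lt list \<Rightarrow> complex) \<Rightarrow> (lt list \<Rightarrow> complex)"
    and w :: "lt list" and m :: nat
  assumes "cstar_norm N"
    and "unital_star_hom \<phi>"
    and "\<forall>n \<ge> 1. \<phi> (dlt [T n False]) = a_elt N n"
    and "sinf_word w" and "len w = m"
  shows "lin_span (Lm_bcs m) (\<phi> (dlt w)) \<and>
         (\<forall>y \<in> Lm_sinf m. dual_pair (\<phi> (dlt y)) w \<noteq> 0 \<longleftrightarrow> y = w)"
proof
  note M = main[OF assms(1-3)]
  have iw: "in_alg sinf_word (dlt w)" by (rule in_alg_dlt) (rule assms(4))
  have ib: "in_alg bcs_word (\<phi> (dlt w))" using assms(2) iw unfolding unital_star_hom_def by blast
  define F where "F = supp (\<phi> (dlt w))"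
  have fin: "finite F" using ib unfolding in_alg_def F_def by blast
  have sub: "F \<subseteq> Lm_bcs m"
  proof
    fix u assume u: "u \<in> F"
    then have "bcs_word u" using ib unfolding in_alg_def F_def by blast
    moreover have "length u \<le> m" using M[OF assms(4)] u assms(5) by (auto simp: F_def supp_def len_def)
    ultimately show "u \<in> Lm_bcs m" by (simp add: Lm_bcs_def len_def)
  qed
  have "\<phi> (dlt w) = (\<lambda>x. \<Sum>u\<in>F. \<phi> (dlt w) u * dlt u x)"
  proof
    fix x
    have "(\<Sum>u\<in>F. \<phi> (dlt w) u * dlt u x) = (\<Sum>u\<in>F. if u = x then \<phi> (dlt w) u else 0)"
      by (rule sum.cong) (auto simp: dlt_def)
    also have "\<dots> = (if x \<in> F then \<phi> (dlt w) x else 0)" using fin by (simp add: sum.delta')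
    also have "\<dots> = \<phi> (dlt w) x" by (auto simp: F_def supp_def)
    finally show "\<phi> (dlt w) x = (\<Sum>u\<in>F. \<phi> (dlt w) u * dlt u x)" by simp
  qed
  then show "lin_span (Lm_bcs m) (\<phi> (dlt w))" unfolding lin_span_def using fin sub by blast
next
  note M = main[OF assms(1-3)]
  have tw: "tcount w = m"
  proof -
    have "filter (\<lambda>x. \<not> isB x) w = w"
      using assms(4) unfolding sinf_word_def by (force simp: filter_id_conv)
    then show ?thesis using assms(5) by (simp add: tcount_def len_def)
  qed
  show "\<forall>y \<in> Lm_sinf m. dual_pair (\<phi> (dlt y)) w \<noteq> 0 \<longleftrightarrow> y = w"
  proof (intro ballI iffI)
    fix y assume y: "y \<in> Lm_sinf m" and nz: "dual_pair (\<phi> (dlt y)) w \<noteq> 0"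
    have sy: "sinf_word y" "length y \<le> m" using y by (auto simp: Lm_sinf_def len_def)
    have "tcount w \<le> length y \<and> (tcount w = length y \<longrightarrow> w = y)"
      using M[OF sy(1)] nz by (auto simp: dual_pair_def)
    then show "y = w" using tw sy(2) by auto
  next
    fix y assume "y = w"
    then show "dual_pair (\<phi> (dlt y)) w \<noteq> 0" using M[OF assms(4)] by (simp add: dual_pair_def)
  qed
qed

end
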